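(* Every positive tight program $P$ can be isomorphically represented by a cascade program product of reset programs; that is, there exist $k\ge1$, a finite nonempty set $\mathcal I_{\mathbf P}$ and a feedforward function $\psi_{\mathbf P}$ such that the product $\mathbf P=R\ltimes\dots\ltimes R\,[\mathcal I_{\mathbf P},\psi_{\mathbf P}]$ ($k$ factors, each the reset program $R$) satisfies $\Psi_P\in\mathbf I\mathbf S(\{\Psi_{\mathbf P}\})$.
   Context: Programs: a (normal logic) program $P$ over a finite nonempty set of atoms $\Gamma_P$ is a finite nonempty set of rules $a\leftarrow b_1,\dots,b_k,\mathrm{not}\,b_{k+1},\dots,\mathrm{not}\,b_m$ ($m\ge k\ge 0$, atoms in $\Gamma_P$); for such a rule $r$, $H(r)=a$, $B^+(r)=\{b_1,\dots,b_k\}$, $B^-(r)=\{b_{k+1},\dots,b_m\}$. $P$ is positive if $B^-(r)=\emptyset$ for every $r\in P$. $P$ is tight if there is a map $\ell:\Gamma_P\to\mathbb Z_{\ge0}$ with $\ell(H(r))>\ell(b)$ for every rule $r\in P$ and every $b\in B^+(r)$. $\mathcal I_P$ is the power set of $\Gamma_P$. $\Psi_P:\mathcal I_P\times\mathcal I_P\to\mathcal I_P$ is $\Psi_P(I,J)=\{H(r): r\in P,\ B^+(r)\subseteq I,\ B^-(r)\cap J=\emptyset\}$. The characteristic automaton of $P$ is $\langle \mathcal I_P,\mathcal I_P,\Psi_P\rangle$, also denoted $\Psi_P$. Reset program: $R$ over $\{1\}$ consists of the single rule $1\leftarrow\mathrm{not}\,1$ (so $\Psi_R(I,J)=\{1\}$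 if $J=\emptyset$ and $\emptyset$ otherwise). Automata: an automaton $\langle Q,\Sigma,\delta\rangle$ has finite state set $Q$, finite nonempty input alphabet $\Sigma$, and $\delta:Q\times\Sigma\to Q$. $\langle Q',\Sigma',\delta'\rangle$ is a subautomaton of $\langle Q,\Sigma,\delta\rangle$ if $Q'\subseteq Q$, $\Sigma'\subseteq\Sigma$, $\delta(Q'\times\Sigma')\subseteq Q'$ and $\delta'=\delta|_{Q'\times\Sigma'}$. An isomorphism onto $\langle Q',\Sigma',\delta'\rangle$ is a pair of bijections $h_1:Q\to Q'$, $h_2:\Sigma\to\Sigma'$ with $h_1(\delta(q,x))=\delta'(h_1(q),h_2(x))$ for all $q,x$. $\mathbf S(\mathcal A)$, $\mathbf I(\mathcal A)$ denote the classes of subautomata and isomorphic images of automata in $\mathcal A$. Cascade program product: let $P_1,\dots,P_k$ ($k\ge1$) be programs and $\mathcal I_{\mathbf P}$ a finite nonempty set. A feedforward function is $\psi_{\mathbf P}=(\psi_{\mathbf P,1},\dots,\psi_{\mathbf P,k})$ with $\psi_{\mathbf P,i}:(\mathcal I_{P_1}\times\dots\times\mathcal I_{P_k})\times\mathcal I_{\mathbf P}\to\mathcal I_{P_i}$ not depending on its $j$-th component for any $j\ge i$. The product $\mathbf P=P_1\ltimes\dots\ltimes P_k[\mathcal I_{\mathbf P},\psi_{\mathbf P}]$ has characteristic automaton $\Psi_{\mathbf P}=\langle \mathcal I_{P_1}\times\dots\times\mathcal I_{P_k},\ \mathcal I_{\mathbf P},\ \Psi_{\mathbf P}\rangle$ with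 $\Psi_{\mathbf P}((I_1,\dots,I_k),\mathbf J)=\big(\Psi_{P_1}(I_1,\psi_{\mathbf P,1}(\mathbf J)),\dots,\Psi_{P_k}(I_k,\psi_{\mathbf P,k}((I_1,\dots,I_{k-1}),\mathbf J))\big)$. The product isomorphically represents $P$ if $\Psi_P\in\mathbf I\mathbf S(\{\Psi_{\mathbf P}\})$. *)

theory Defs
  imports Main
begin

text \<open>A rule a <- b1,...,bk, not b(k+1),...,not bm is a triple (H, B+, B-).\<close>
type_synonym 'a rule = "'a \<times> 'a set \<times> 'a set"

definition H :: "'a rule \<Rightarrow> 'a" where "H r = fst r"
definition Bpos :: "'a rule \<Rightarrow> 'a set" where "Bpos r = fst (snd r)"
definition Bneg :: "'a rule \<Rightarrow> 'a set" where "Bneg r = snd (snd r)"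

definition program :: "'a set \<Rightarrow> 'a rule set \<Rightarrow> bool" where
  "program \<Gamma> P \<longleftrightarrow> finite \<Gamma> \<and> \<Gamma> \<noteq> {} \<and> finite P \<and> P \<noteq> {} \<and>
     (\<forall>r\<in>P. H r \<in> \<Gamma> \<and> Bpos r \<subseteq> \<Gamma> \<and> Bneg r \<subseteq> \<Gamma>)"

definition positive :: "'a rule set \<Rightarrow> bool" where
  "positive P \<longleftrightarrow> (\<forall>r\<in>P. Bneg r = {})"

definition tight :: "'a rule set \<Rightarrow> bool" where
  "tight P \<longleftrightarrow> (\<exists>lv :: 'a \<Rightarrow> nat. \<forall>r\<in>P. \<forall>b\<in>Bpos r. lv (H r) > lv b)"

definition Psi :: "'a rule set \<Rightarrow> 'a set \<Rightarrow> 'a set \<Rightarrow> 'a set" where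
  "Psi P I J = {H r | r. r \<in> P \<and> Bpos r \<subseteq> I \<and> Bneg r \<inter> J = {}}"

definition reset_prog :: "nat set \<times> nat rule set" where
  "reset_prog = ({1}, {(1, {}, {1})})"

definition in_IS ::
  "'q set \<Rightarrow> 's set \<Rightarrow> ('q \<Rightarrow> 's \<Rightarrow> 'q) \<Rightarrow> 'p set \<Rightarrow> 't set \<Rightarrow> ('p \<Rightarrow> 't \<Rightarrow> 'p) \<Rightarrow> bool" where
  "in_IS Q \<Sigma> \<delta> Q2 \<Sigma>2 \<delta>2 \<longleftrightarrow>
     (\<exists>Q' \<Sigma>'. Q' \<subseteq> Q2 \<and> \<Sigma>' \<subseteq> \<Sigma>2 \<and> \<Sigma>' \<noteq> {} \<and>
        (\<forall>q\<in>Q'. \<forall>x\<in>\<Sigma>'. \<delta>2 q x \<in> Q') \<and>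
        (\<exists>h1 h2. bij_betw h1 Q Q' \<and> bij_betw h2 \<Sigma> \<Sigma>' \<and>
           (\<forall>q\<in>Q. \<forall>x\<in>\<Sigma>. h1 (\<delta> q x) = \<delta>2 (h1 q) (h2 x))))"

text \<open>Cascade product of a list of programs Ps = [P_1,...,P_k] (0-indexed here).\<close>
definition cascade_states :: "('a set \<times> 'a rule set) list \<Rightarrow> 'a set list set" where
  "cascade_states Ps = {s. length s = length Ps \<and> (\<forall>i<length Ps. s ! i \<subseteq> fst (Ps ! i))}"

definition feedforward ::
  "('a set \<times> 'a rule set) list \<Rightarrow> 'b set \<Rightarrow> (nat \<Rightarrow> 'a set list \<Rightarrow> 'b \<Rightarrow> 'a set) \<Rightarrow> bool" where
  "feedforward Ps IP \<psi> \<longleftrightarrow>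
     (\<forall>i<length Ps. \<forall>s\<in>cascade_states Ps. \<forall>x\<in>IP. \<psi> i s x \<subseteq> fst (Ps ! i)) \<and>
     (\<forall>i<length Ps. \<forall>s\<in>cascade_states Ps. \<forall>s'\<in>cascade_states Ps. \<forall>x\<in>IP.
        take i s = take i s' \<longrightarrow> \<psi> i s x = \<psi> i s' x)"

definition cascade_delta ::
  "('a set \<times> 'a rule set) list \<Rightarrow> (nat \<Rightarrow> 'a set list \<Rightarrow> 'b \<Rightarrow> 'a set) \<Rightarrow> 'a set list \<Rightarrow> 'b \<Rightarrow> 'a set list" where
  "cascade_delta Ps \<psi> s x = map (\<lambda>i. Psi (snd (Ps ! i)) (s ! i) (\<psi> i s x)) [0..<length Ps]"

end

theory Submission
  imports Defs
begin

lemma reset_Psi: "Psi {(1::nat, {}, {1})} S J = (if 1 \<in> J then {} else {1})"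
  by (auto simp: Psi_def H_def Bpos_def Bneg_def)

theorem theorem5p3:
  fixes \<Gamma> :: "'a set" and P :: "'a rule set"
  assumes "program \<Gamma> P" and "positive P" and "tight P"
  shows "\<exists>k::nat. k \<ge> 1 \<and> (\<exists>(IP :: nat set) \<psi>. finite IP \<and> IP \<noteq> {} \<and>
           feedforward (replicate k reset_prog) IP \<psi> \<and>
           in_IS (Pow \<Gamma>) (Pow \<Gamma>) (Psi P)
                 (cascade_states (replicate k reset_prog)) IP
                 (cascade_delta (replicate k reset_prog) \<psi>))"
proof -
  have finG: "finite \<Gamma>" and neG: "\<Gamma> \<noteq> {}" and PG: "\<forall>r\<in>P. H r \<in> \<Gamma> \<and> Bpos r \<subseteq> \<Gamma>"
    using assms(1) by (auto simp: program_def)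
  obtain lv :: "'a \<Rightarrow> nat" where lv: "\<forall>r\<in>P. \<forall>b\<in>Bpos r. lv (H r) > lv b"
    using assms(3) by (auto simp: tight_def)
  obtain xs where xs: "set xs = \<Gamma>" "distinct xs" using finite_distinct_list[OF finG] by blast
  define ys where "ys = sort_key lv xs"
  have ys: "set ys = \<Gamma>" "distinct ys" "sorted (map lv ys)" using xs by (auto simp: ys_def)
  define n where "n = length ys"
  have n1: "n \<ge> 1" using ys(1) neG by (cases ys) (auto simp: n_def)
  have ord: "j < i" if "i < n" "j < n" "lv (ys!j) < lv (ys!i)" for i j
  proof (rule ccontr)
    assume "\<not> j < i" hence "i \<le> j" by simp
    hence "(map lv ys)!i \<le> (map lv ys)!j" using sorted_nth_mono[OF ys(3)] that by (simp add: n_def)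
    thus False using that by (simp add: n_def)
  qed
  have inG: "\<exists>j<n. b = ys!j" if "b \<in> \<Gamma>" for b using that ys(1) by (auto simp: n_def in_set_conv_nth)
  define C where "C i t = (\<exists>r\<in>P. H r = ys!i \<and> (\<forall>b\<in>Bpos r. \<exists>j<i. b = ys!j \<and> t!j = {1::nat}))" for i t
  define \<psi> where "\<psi> i s (x::nat) = (if C i (take i s) then {} else {1::nat})" for i s x
  define h1 where "h1 I = map (\<lambda>i. if ys!i \<in> I then {1::nat} else {}) [0..<n]" for I
  obtain h2 where h2: "bij_betw h2 (Pow \<Gamma>) {0..<card (Pow \<Gamma>)}"
    using ex_bij_betw_finite_nat[of "Pow \<Gamma>"] finG by auto
  define IP where "IP = {0..<card (Pow \<Gamma>)}"
  have cardpos: "card (Pow \<Gamma>) > 0" using finG by (auto simp: card_gt_0_iff)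
  let ?R = "replicate n reset_prog"
  have ff: "feedforward ?R IP \<psi>"
    unfolding feedforward_def by (auto simp: \<psi>_def reset_prog_def)
  have h1_states: "h1 ` Pow \<Gamma> \<subseteq> cascade_states ?R"
    by (auto simp: h1_def cascade_states_def reset_prog_def split: if_splits)
  have inj: "inj_on h1 (Pow \<Gamma>)"
  proof (rule inj_onI)
    fix I J assume IJ: "I \<in> Pow \<Gamma>" "J \<in> Pow \<Gamma>" "h1 I = h1 J"
    have "ys!i \<in> I \<longleftrightarrow> ys!i \<in> J" if "i < n" for i
    proof -
      have "h1 I ! i = h1 J ! i" using IJ by simp
      thus ?thesis using that by (auto simp: h1_def split: if_splits)
    qed
    thus "I = J" using IJ inG by blast
  qed
  have delta: "h1 (Psi P I X) = cascade_delta ?R \<psi> (h1 I) x" if I: "I \<subseteq> \<Gamma>" for I X x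
  proof -
    have PsiP: "Psi P I X = {H r | r. r \<in> P \<and> Bpos r \<subseteq> I}"
      using assms(2) unfolding Psi_def positive_def by blast
    have key: "C i (take i (h1 I)) \<longleftrightarrow> ys!i \<in> Psi P I X" if i: "i < n" for i
    proof
      assume "C i (take i (h1 I))"
      then obtain r where r: "r \<in> P" "H r = ys!i"
        "\<forall>b\<in>Bpos r. \<exists>j<i. b = ys!j \<and> take i (h1 I) ! j = {1}" by (auto simp: C_def)
      have "Bpos r \<subseteq> I"
      proof
        fix b assume "b \<in> Bpos r"
        then obtain j where "j < i" "b = ys!j" "take i (h1 I) ! j = {1}" using r by blast
        thus "b \<in> I" using i by (auto simp: h1_def split: if_splits)
      qed
      thus "ys!i \<in> Psi P I X" using r PsiP by (metis (mono_tags, lifting) mem_Collect_eq)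
    next
      assume "ys!i \<in> Psi P I X"
      then obtain r where r: "r \<in> P" "H r = ys!i" "Bpos r \<subseteq> I" using PsiP by (smt (verit) mem_Collect_eq)
      have "\<forall>b\<in>Bpos r. \<exists>j<i. b = ys!j \<and> take i (h1 I) ! j = {1}"
      proof
        fix b assume b: "b \<in> Bpos r"
        then obtain j where j: "j < n" "b = ys!j" using inG PG r(1) by blast
        have "j < i" using ord[OF i j(1)] lv r b j by auto
        moreover have "take i (h1 I) ! j = {1}" using \<open>j < i\<close> j b r(3) i
          by (auto simp: h1_def)
        ultimately show "\<exists>j<i. b = ys!j \<and> take i (h1 I) ! j = {1}" using j by blast
      qed
      thus "C i (take i (h1 I))" using r by (auto simp: C_def)
    qed
    show ?thesis
    proof (rule nth_equalityI)
      show "length (h1 (Psi P I X)) = length (cascade_delta ?R \<psi> (h1 I) x)"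
        by (simp add: h1_def cascade_delta_def)
      fix i assume "i < length (h1 (Psi P I X))"
      hence i: "i < n" by (simp add: h1_def)
      have "cascade_delta ?R \<psi> (h1 I) x ! i = Psi {(1::nat, {}, {1})} (h1 I ! i) (\<psi> i (h1 I) x)"
        using i by (simp add: cascade_delta_def reset_prog_def del: One_nat_def)
      also have "\<dots> = (if C i (take i (h1 I)) then {1} else {})"
        by (simp only: reset_Psi \<psi>_def) simp
      also have "\<dots> = h1 (Psi P I X) ! i" using key[OF i] i by (simp add: h1_def)
      finally show "h1 (Psi P I X) ! i = cascade_delta ?R \<psi> (h1 I) x ! i" by simp
    qed
  qed
  show ?thesis
  proof (intro exI conjI)
    show "1 \<le> n" by (fact n1)
    show "finite IP" "IP \<noteq> {}" using cardpos by (auto simp: IP_def)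
    show "feedforward ?R IP \<psi>" by (fact ff)
    show "in_IS (Pow \<Gamma>) (Pow \<Gamma>) (Psi P) (cascade_states ?R) IP (cascade_delta ?R \<psi>)"
      unfolding in_IS_def
    proof (intro exI conjI)
      show "h1 ` Pow \<Gamma> \<subseteq> cascade_states ?R" by (fact h1_states)
      show "IP \<subseteq> IP" "IP \<noteq> {}" using cardpos by (auto simp: IP_def)
      show "\<forall>q\<in>h1 ` Pow \<Gamma>. \<forall>x\<in>IP. cascade_delta ?R \<psi> q x \<in> h1 ` Pow \<Gamma>"
      proof (intro ballI)
        fix q x assume "q \<in> h1 ` Pow \<Gamma>" "x \<in> IP"
        then obtain I where I: "I \<subseteq> \<Gamma>" "q = h1 I" by auto
        have "Psi P I {} \<subseteq> \<Gamma>" using PG by (auto simp: Psi_def)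
        thus "cascade_delta ?R \<psi> q x \<in> h1 ` Pow \<Gamma>" using delta[OF I(1), of "{}" x] I by (metis PowI image_eqI)
      qed
      show "bij_betw h1 (Pow \<Gamma>) (h1 ` Pow \<Gamma>)" using inj by (simp add: bij_betw_def)
      show "bij_betw h2 (Pow \<Gamma>) IP" using h2 by (simp add: IP_def)
      show "\<forall>q\<in>Pow \<Gamma>. \<forall>x\<in>Pow \<Gamma>. h1 (Psi P q x) = cascade_delta ?R \<psi> (h1 q) (h2 x)"
        using delta by auto
    qed
  qed
qed

end
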